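(* Let $\ln f(y\mid\theta)=-\tfrac12(y-\theta)^2$. Fix $M\ge1$, reals $y_\mu,a_\mu$ and $s_\mu>0$ ($\mu=1,\dots,M$), and let $\gamma_0=-1/\max_\mu s_\mu$. For $\gamma>\gamma_0$ let $$\theta^*_\mu(\gamma)=\mathop{\mathrm{argmax}}_{\theta}\Big\{\gamma\ln f(y_\mu\mid\theta)-\frac{(\theta-a_\mu)^2}{2s_\mu}\Big\},\qquad g_\mu(\gamma)=y_\mu-\theta^*_\mu(\gamma),$$ $$\mathcal T(\gamma)=\frac1M\sum_{\mu=1}^M\Big[\gamma\ln f(y_\mu\mid\theta^*_\mu(\gamma))-\frac{(\theta^*_\mu(\gamma)-a_\mu)^2}{2s_\mu}\Big].$$ Then (i) $\mathcal T'(\gamma)=\frac1M\sum_\mu\ln f(y_\mu\mid\theta^*_\mu(\gamma))$ and for every integer $k\ge2$ and $\gamma>\gamma_0$, $$\mathcal T^{(k)}(\gamma)=\frac{k!}{2M}(-1)^k\sum_{\mu=1}^M g_\mu(\gamma)^2\Big(\frac{s_\mu}{1+\gamma s_\mu}\Big)^{k-1}.$$ (ii) Assume $y_\mu\neq a_\mu$ for some $\mu$, and put $g_\mu=g_\mu(1)$, $r_\mu=s_\mu/(1+s_\mu)$. Then the limit $L=\lim_{n\to\infty}\frac{\sum_\mu g_\mu^2r_\mu^{\,n}}{\sum_\mu g_\mu^2 r_\mu^{\,n-1}}$ exists, and the power series $\sum_{k\ge0}\frac{1}{k!}\mathcal T^{(k)}(1)\,\eta^k$ (the Taylor expansion of $\mathcal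 T$ about $\gamma=1$ in the increment $\eta$) converges when $|\eta| L<1$ and diverges when $|\eta|L>1$. In particular, if $s_\mu=s$ for all $\mu$, it converges iff... more precisely converges for $|\eta|\,\frac{s}{1+s}<1$ and diverges for $|\eta|\,\frac{s}{1+s}>1$.
   Context: This is the GAMP (generalized approximate message passing) description for the Gaussian likelihood: $a_\mu$ plays the role of the cavity estimate $\widehat\theta^{\setminus\mu}_\mu$ of the model parameter, $s_\mu$ the rescaled variance ${s_\theta}_\mu$, and $g_\mu$ the rescaled quantity $(\check g_{\mathrm{out}})_\mu$; $\mathcal T''(1)$ is the GAMP expression of the functional variance. The series expansion of $\mathcal T$ is the one underlying the widely applicable information criterion (WAIC). When the predictor entries are i.i.d. with mean 0 and variance 1, all $s_\mu$ coincide with a common value $s$. *)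

theory Defs
  imports "HOL-Analysis.Analysis"
begin

definition lnf :: "real \<Rightarrow> real \<Rightarrow> real" where
  "lnf y \<theta> = - (1/2) * (y - \<theta>)^2"

definition obj :: "real \<Rightarrow> real \<Rightarrow> real \<Rightarrow> real \<Rightarrow> real \<Rightarrow> real" where
  "obj y a s \<gamma> \<theta> = \<gamma> * lnf y \<theta> - (\<theta> - a)^2 / (2 * s)"

definition theta_star :: "real \<Rightarrow> real \<Rightarrow> real \<Rightarrow> real \<Rightarrow> real" where
  "theta_star y a s \<gamma> = (ARG_MAX (obj y a s \<gamma>) \<theta>. True)"

definition gfun :: "real \<Rightarrow> real \<Rightarrow> real \<Rightarrow> real \<Rightarrow> real" where
  "gfun y a s \<gamma> = y - theta_star y a s \<gamma>"

definition Tfun :: "nat \<Rightarrow> (nat \<Rightarrow> real) \<Rightarrow> (nat \<Rightarrow> real) \<Rightarrow> (nat \<Rightarrow> real) \<Rightarrow> real \<Rightarrow> real" where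
  "Tfun M y a s \<gamma> = (1 / real M) *
     (\<Sum>\<mu>\<in>{1..M}. obj (y \<mu>) (a \<mu>) (s \<mu>) \<gamma> (theta_star (y \<mu>) (a \<mu>) (s \<mu>) \<gamma>))"

definition gamma0 :: "nat \<Rightarrow> (nat \<Rightarrow> real) \<Rightarrow> real" where
  "gamma0 M s = - 1 / Max (s ` {1..M})"

end

theory Submission
  imports Defs
begin


lemma obj_sq:
  assumes "sv > 0" "1 + gm* sv > 0"
  shows "obj y a sv gm t = obj y a sv gm ((gm* sv*y + a)/(1+gm* sv)) - (1+gm* sv)/(2* sv)*(t - (gm* sv*y + a)/(1+gm* sv))^2"
proof -
  define T where "T = (gm* sv*y + a)/(1+gm* sv)"
  have h: "gm* sv*y + a = (1+gm* sv)*T" unfolding T_def using assms by simp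
  have e1: "obj y a sv gm x = -(gm* sv*(y-x)^2 + (x-a)^2)/(2* sv)" for x
    unfolding obj_def lnf_def using assms by (simp add: field_simps)
  have key: "gm* sv*(y-t)^2 + (t-a)^2 = (gm* sv*(y-T)^2 + (T-a)^2) + (1+gm* sv)*(t-T)^2"
    using h by algebra
  show ?thesis unfolding T_def[symmetric] e1 key using assms by (simp add: field_simps)
qed

lemma theta_star_eq:
  assumes "sv > 0" "1 + gm* sv > 0"
  shows "theta_star y a sv gm = (gm* sv*y + a)/(1+gm* sv)"
proof -
  let ?t = "(gm* sv*y + a)/(1+gm* sv)"
  have c: "(1+gm* sv)/(2* sv) > 0" using assms by simp
  have le: "obj y a sv gm t \<le> obj y a sv gm ?t" for t
  proof -
    have "0 \<le> (1+gm* sv)/(2* sv)*(t - ?t)^2" by (rule mult_nonneg_nonneg) (use c in simp_all)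
    then show ?thesis using obj_sq[OF assms, of y a t] by linarith
  qed
  have eq: "t = ?t" if "\<not> obj y a sv gm t < obj y a sv gm ?t" for t
  proof -
    have "obj y a sv gm t = obj y a sv gm ?t" using that le[of t] by linarith
    then have "(1+gm* sv)/(2* sv)*(t - ?t)^2 = 0" using obj_sq[OF assms, of y a t] by simp
    then show ?thesis using c assms by auto
  qed
  show ?thesis unfolding theta_star_def arg_max_def is_arg_max_def
  proof (rule some_equality)
    show "True \<and> \<not> (\<exists>y'. True \<and> obj y a sv gm ?t < obj y a sv gm y')"
      using le by (auto simp: not_less)
    fix x assume "True \<and> \<not> (\<exists>y'. True \<and> obj y a sv gm x < obj y a sv gm y')"
    then show "x = ?t" using eq by blast
  qed
qed

lemma diffs:
  assumes "sv > 0" "1 + gm* sv > 0"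
  shows "y - theta_star y a sv gm = (y - a)/(1+gm* sv)"
    "theta_star y a sv gm - a = gm* sv*(y - a)/(1+gm* sv)"
proof -
  have d: "1+gm* sv \<noteq> 0" using assms by simp
  show "y - theta_star y a sv gm = (y - a)/(1+gm* sv)"
    unfolding theta_star_eq[OF assms] using d by (simp add: field_simps)
  show "theta_star y a sv gm - a = gm* sv*(y - a)/(1+gm* sv)"
    unfolding theta_star_eq[OF assms] using d by (simp add: field_simps)
qed

lemma obj_at:
  assumes "sv > 0" "1 + gm* sv > 0"
  shows "obj y a sv gm (theta_star y a sv gm) = - ((y - a)^2) * gm / (2*(1+gm* sv))"
proof -
  have d: "1+gm* sv \<noteq> 0" using assms by simp
  have "obj y a sv gm (theta_star y a sv gm) = - gm * ((y - a)/(1+gm* sv))^2/2 - (gm* sv*(y - a)/(1+gm* sv))^2/(2* sv)"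
    unfolding obj_def lnf_def diffs[OF assms, symmetric] by simp
  also have "\<dots> = - ((y - a)^2) * gm * (1+gm* sv) / (2*(1+gm* sv)^2)"
    using d assms by (simp add: power_divide field_simps) (simp add: algebra_simps power2_eq_square)
  also have "\<dots> = - ((y - a)^2) * gm / (2*(1+gm* sv))"
    using d by (simp add: power2_eq_square)
  finally show ?thesis .
qed

lemma lnf_at:
  assumes "sv > 0" "1 + gm* sv > 0"
  shows "lnf y (theta_star y a sv gm) = - ((y - a)^2) / (2*(1+gm* sv)^2)"
  unfolding lnf_def diffs[OF assms] by (simp add: power_divide)

lemma gfun_at:
  assumes "sv > 0" "1 + gm* sv > 0"
  shows "gfun y a sv gm = (y - a)/(1+gm* sv)"
  unfolding gfun_def diffs[OF assms] ..

definition hh :: "nat \<Rightarrow> real \<Rightarrow> real \<Rightarrow> real" where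
 "hh j sv gm = (if j = 0 then gm/(1+gm* sv) else (-1)^(j+1) * fact j * sv^(j-1) / (1+gm* sv)^(j+1))"

lemma aux_q:
  fixes q :: real assumes "q \<noteq> 0"
  shows "-(k * q^m * sv * inverse ((q^(Suc m))^2)) = -k* sv/q^(Suc (Suc m))"
proof -
  have "(q^(Suc m))^2 = q^m * q^(Suc (Suc m))" by (simp add: power2_eq_square)
  then show ?thesis using assms by (simp add: field_simps)
qed

lemma inv_pow_deriv:
  assumes "1 + gm* sv \<noteq> 0"
  shows "((\<lambda>g. inverse ((1+g* sv)^n)) has_real_derivative (-(real n)* sv/(1+gm* sv)^(Suc n))) (at gm)"
proof -
  have d1: "((\<lambda>g. (1+g* sv)^n) has_real_derivative real n * (1+gm* sv)^(n-1) * sv) (at gm)"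
    by (auto intro!: derivative_eq_intros)
  have d2: "((\<lambda>g. inverse ((1+g* sv)^n)) has_real_derivative
       - (real n * (1+gm* sv)^(n-1) * sv * inverse (((1+gm* sv)^n) ^ 2))) (at gm)"
    using DERIV_inverse_fun[OF d1] assms by (simp add: power2_eq_square)
  have e: "- (real n * (1+gm* sv)^(n-1) * sv * inverse (((1+gm* sv)^n) ^ 2)) = -(real n)* sv/(1+gm* sv)^(Suc n)"
  proof (cases n)
    case 0 then show ?thesis by simp
  next
    case (Suc m)
    show ?thesis using aux_q[OF assms, of "real n" m sv] Suc by simp
  qed
  show ?thesis using d2 unfolding e .
qed

lemma hh_deriv:
  assumes "1 + gm* sv > 0"
  shows "(hh j sv has_real_derivative hh (Suc j) sv gm) (at gm)"
proof (cases j)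
  case 0
  have e: "hh j sv = (\<lambda>g. g/(1+g* sv))" using 0 by (auto simp: hh_def)
  show ?thesis unfolding e using assms
    by (auto intro!: derivative_eq_intros simp: hh_def 0 field_simps power2_eq_square)
next
  case (Suc i)
  define c where "c = (-1::real)^(j+1) * fact j * sv^(j-1)"
  have e: "hh j sv = (\<lambda>g. c * inverse ((1+g* sv)^(j+1)))" using Suc
    by (auto simp: hh_def c_def divide_inverse)
  have "((\<lambda>g. c * inverse ((1+g* sv)^(j+1))) has_real_derivative c * (-(real (j+1))* sv/(1+gm* sv)^(Suc (j+1)))) (at gm)"
    using DERIV_cmult[OF inv_pow_deriv[of gm sv "j+1"], of c] assms by simp
  moreover have "c * (-(real (j+1))* sv/(1+gm* sv)^(Suc (j+1))) = hh (Suc j) sv gm"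
    unfolding c_def hh_def using Suc by (simp add: algebra_simps)
  ultimately show ?thesis unfolding e by simp
qed



lemma part2:
  fixes M :: nat and gg rr D :: "nat \<Rightarrow> real"
  assumes M: "M \<ge> 1"
    and rpos: "\<forall>\<mu>\<in>{1..M}. 0 < rr \<mu> \<and> rr \<mu> < 1"
    and ex: "\<exists>\<mu>\<in>{1..M}. gg \<mu> \<noteq> 0"
    and Dk: "\<forall>k\<ge>2. D k = fact k / (2 * real M) * (-1) ^ k * (\<Sum>\<mu>\<in>{1..M}. (gg \<mu>)^2 * (rr \<mu>) ^ (k - 1))"
    and R_def: "R = Max (rr ` {\<mu>\<in>{1..M}. gg \<mu> \<noteq> 0})"
  shows "(\<lambda>n. (\<Sum>\<mu>\<in>{1..M}. (gg \<mu>)^2 * (rr \<mu>) ^ n) / (\<Sum>\<mu>\<in>{1..M}. (gg \<mu>)^2 * (rr \<mu>) ^ (n - 1))) \<longlonglongrightarrow> R"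
    and "\<forall>\<eta>::real. \<bar>\<eta>\<bar> * R < 1 \<longrightarrow> summable (\<lambda>k. D k / fact k * \<eta> ^ k)"
    and "\<forall>\<eta>::real. \<bar>\<eta>\<bar> * R > 1 \<longrightarrow> \<not> summable (\<lambda>k. D k / fact k * \<eta> ^ k)"
    and "\<forall>r0. (\<forall>\<mu>\<in>{1..M}. rr \<mu> = r0) \<longrightarrow> R = r0"
proof -
  define S where "S = {\<mu>\<in>{1..M}. gg \<mu> \<noteq> 0}"
  have finS: "finite S" unfolding S_def by simp
  have neS: "S \<noteq> {}" using ex unfolding S_def by auto
  have SM: "S \<subseteq> {1..M}" unfolding S_def by auto
  have RS: "R = Max (rr ` S)" unfolding R_def S_def ..
  have Rge: "\<mu> \<in> S \<Longrightarrow> rr \<mu> \<le> R" for \<mu> unfolding RS using finS by simp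
  have "R \<in> rr ` S" unfolding RS using finS neS by (intro Max_in) auto
  then obtain \<mu>0 where mu0: "\<mu>0 \<in> S" "rr \<mu>0 = R" by auto
  have Rpos: "R > 0" using mu0 SM rpos by force
  have g0: "gg \<mu>0 \<noteq> 0" using mu0 unfolding S_def by auto
  have restrict: "(\<Sum>\<mu>\<in>{1..M}. (gg \<mu>)^2 * h \<mu>) = (\<Sum>\<mu>\<in>S. (gg \<mu>)^2 * h \<mu>)" for h
    by (rule sum.mono_neutral_right) (auto simp: S_def)
  have fk2: "D (k+2) / fact (k+2) * \<eta> ^ (k+2) =
      (\<Sum>\<mu>\<in>{1..M}. ((gg \<mu>)^2 * rr \<mu> * \<eta>^2 / (2 * real M)) * (- \<eta> * rr \<mu>) ^ k)" for k \<eta>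
  proof -
    have "D (k+2) = fact (k+2) / (2 * real M) * (-1) ^ k * (\<Sum>\<mu>\<in>{1..M}. (gg \<mu>)^2 * (rr \<mu>) ^ (k + 1))"
      using Dk by simp
    then have "D (k+2) / fact (k+2) * \<eta> ^ (k+2) = (\<Sum>\<mu>\<in>{1..M}. (-1) ^ k * \<eta> ^ (k+2) / (2 * real M) * ((gg \<mu>)^2 * (rr \<mu>) ^ (k + 1)))"
    proof -
      have gen: "F / (2 * real M) * sg * X / F * e = sg * e / (2 * real M) * X" if "F \<noteq> 0" for F sg X e :: real
        using that by simp
      show ?thesis unfolding \<open>D (k+2) = _\<close> 
        by (subst gen[OF fact_nonzero]) (simp add: sum_distrib_left)
    qed
    also have "\<dots> = (\<Sum>\<mu>\<in>{1..M}. ((gg \<mu>)^2 * rr \<mu> * \<eta>^2 / (2 * real M)) * (- \<eta> * rr \<mu>) ^ k)"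
      by (rule sum.cong) (simp_all add: power_mult_distrib power_minus' power_add field_simps power2_eq_square)
    finally show ?thesis .
  qed
  show "(\<lambda>n. (\<Sum>\<mu>\<in>{1..M}. (gg \<mu>)^2 * (rr \<mu>) ^ n) / (\<Sum>\<mu>\<in>{1..M}. (gg \<mu>)^2 * (rr \<mu>) ^ (n - 1))) \<longlonglongrightarrow> R"
  proof -
    define A where "A = (\<lambda>m. \<Sum>\<mu>\<in>S. (gg \<mu>)^2 * rr \<mu> * (rr \<mu> / R) ^ m)"
    define B where "B = (\<lambda>m. \<Sum>\<mu>\<in>S. (gg \<mu>)^2 * (rr \<mu> / R) ^ m)"
    define ind where "ind = (\<lambda>\<mu>. if rr \<mu> = R then 1 else (0::real))"
    have lim1: "(\<lambda>m. (rr \<mu> / R) ^ m) \<longlonglongrightarrow> ind \<mu>" if "\<mu> \<in> S" for \<mu>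
    proof (cases "rr \<mu> = R")
      case True then show ?thesis using Rpos by (simp add: ind_def)
    next
      case False
      have "rr \<mu> < R" using Rge[OF that] False by simp
      moreover have "rr \<mu> > 0" using that SM rpos by force
      ultimately have "norm (rr \<mu> / R) < 1" using Rpos by simp
      then show ?thesis using False by (simp add: ind_def LIMSEQ_power_zero)
    qed
    have limA: "A \<longlonglongrightarrow> (\<Sum>\<mu>\<in>S. (gg \<mu>)^2 * rr \<mu> * ind \<mu>)"
      unfolding A_def by (intro tendsto_sum tendsto_mult_left lim1)
    have limB: "B \<longlonglongrightarrow> (\<Sum>\<mu>\<in>S. (gg \<mu>)^2 * ind \<mu>)"
      unfolding B_def by (intro tendsto_sum tendsto_mult_left lim1)
    have AB: "(\<Sum>\<mu>\<in>S. (gg \<mu>)^2 * rr \<mu> * ind \<mu>) = R * (\<Sum>\<mu>\<in>S. (gg \<mu>)^2 * ind \<mu>)"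
      unfolding sum_distrib_left by (rule sum.cong) (auto simp: ind_def)
    have Bpos: "(\<Sum>\<mu>\<in>S. (gg \<mu>)^2 * ind \<mu>) > 0"
    proof -
      have "(gg \<mu>0)^2 * ind \<mu>0 \<le> (\<Sum>\<mu>\<in>S. (gg \<mu>)^2 * ind \<mu>)"
        by (rule member_le_sum) (auto simp: ind_def mu0 finS)
      moreover have "(gg \<mu>0)^2 * ind \<mu>0 > 0" using g0 mu0 by (simp add: ind_def)
      ultimately show ?thesis by linarith
    qed
    have limAB: "(\<lambda>m. A m / B m) \<longlonglongrightarrow> R"
      using tendsto_divide[OF limA limB] Bpos unfolding AB by simp
    have eqAB: "(\<Sum>\<mu>\<in>{1..M}. (gg \<mu>)^2 * (rr \<mu>) ^ Suc m) / (\<Sum>\<mu>\<in>{1..M}. (gg \<mu>)^2 * (rr \<mu>) ^ (Suc m - 1)) = A m / B m" for m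
    proof -
      have a: "(\<Sum>\<mu>\<in>{1..M}. (gg \<mu>)^2 * (rr \<mu>) ^ Suc m) = R^m * A m"
        unfolding restrict A_def sum_distrib_left
        by (rule sum.cong) (use Rpos in \<open>simp_all add: power_divide\<close>)
      have b: "(\<Sum>\<mu>\<in>{1..M}. (gg \<mu>)^2 * (rr \<mu>) ^ (Suc m - 1)) = R^m * B m"
        unfolding restrict B_def sum_distrib_left
        by (rule sum.cong) (use Rpos in \<open>simp_all add: power_divide\<close>)
      show ?thesis unfolding a b using Rpos by simp
    qed
    show ?thesis
      apply (subst filterlim_sequentially_Suc[symmetric])
      unfolding eqAB by (rule limAB)
  qed
  show "\<forall>\<eta>::real. \<bar>\<eta>\<bar> * R < 1 \<longrightarrow> summable (\<lambda>k. D k / fact k * \<eta> ^ k)"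
  proof (intro allI impI)
    fix \<eta> :: real assume h: "\<bar>\<eta>\<bar> * R < 1"
    have "summable (\<lambda>k. D (k+2) / fact (k+2) * \<eta> ^ (k+2))"
      unfolding fk2
    proof (rule summable_sum)
      fix \<mu> assume mu: "\<mu> \<in> {1..M}"
      show "summable (\<lambda>k. ((gg \<mu>)^2 * rr \<mu> * \<eta>^2 / (2 * real M)) * (- \<eta> * rr \<mu>) ^ k)"
      proof (cases "gg \<mu> = 0")
        case True then show ?thesis by simp
      next
        case False
        then have "\<mu> \<in> S" using mu unfolding S_def by auto
        then have "rr \<mu> \<le> R" "rr \<mu> > 0" using Rge mu rpos by auto
        then have "\<bar>\<eta>\<bar> * rr \<mu> \<le> \<bar>\<eta>\<bar> * R" by (simp add: mult_left_mono)
        then have "norm (- \<eta> * rr \<mu>) < 1" using h \<open>rr \<mu> > 0\<close> by (simp add: abs_mult)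
        then show ?thesis by (intro summable_mult summable_geometric)
      qed
    qed
    then show "summable (\<lambda>k. D k / fact k * \<eta> ^ k)"
      using summable_iff_shift[of "\<lambda>k. D k / fact k * \<eta> ^ k" 2] by simp
  qed
  show "\<forall>\<eta>::real. \<bar>\<eta>\<bar> * R > 1 \<longrightarrow> \<not> summable (\<lambda>k. D k / fact k * \<eta> ^ k)"
  proof (intro allI impI notI)
    fix \<eta> :: real assume h: "\<bar>\<eta>\<bar> * R > 1" and sm: "summable (\<lambda>k. D k / fact k * \<eta> ^ k)"
    have "(\<lambda>k. D (k+2) / fact (k+2) * \<eta> ^ (k+2)) \<longlonglongrightarrow> 0"
      using LIMSEQ_ignore_initial_segment[OF summable_LIMSEQ_zero[OF sm], of 2] by simp
    then have lim0: "(\<lambda>k. (\<Sum>\<mu>\<in>{1..M}. ((gg \<mu>)^2 * rr \<mu> * \<eta>^2 / (2 * real M)) * (- \<eta> * rr \<mu>) ^ k)) \<longlonglongrightarrow> 0"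
      unfolding fk2 .
    define eps where "eps = (gg \<mu>0)^2 * \<bar>\<eta>\<bar> / (2 * real M)"
    have etapos: "\<bar>\<eta>\<bar> > 0"
    proof (rule ccontr)
      assume "\<not> \<bar>\<eta>\<bar> > 0" then have "\<eta> = 0" by simp
      then show False using h by simp
    qed
    have Mpos: "real M > 0" using M by simp
    have epspos: "eps > 0" unfolding eps_def using g0 etapos Mpos by simp
    have bound: "eps \<le> \<bar>\<Sum>\<mu>\<in>{1..M}. ((gg \<mu>)^2 * rr \<mu> * \<eta>^2 / (2 * real M)) * (- \<eta> * rr \<mu>) ^ k\<bar>" for k
    proof -
      have e: "(\<Sum>\<mu>\<in>{1..M}. ((gg \<mu>)^2 * rr \<mu> * \<eta>^2 / (2 * real M)) * (- \<eta> * rr \<mu>) ^ k)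
          = (- 1) ^ k * (\<eta>^2 * \<eta> ^ k / (2 * real M)) * (\<Sum>\<mu>\<in>{1..M}. (gg \<mu>)^2 * rr \<mu> ^ (k+1))"
        unfolding sum_distrib_left
        by (rule sum.cong) (simp_all add: power_mult_distrib power_minus' field_simps)
      have nn: "0 \<le> (\<Sum>\<mu>\<in>{1..M}. (gg \<mu>)^2 * rr \<mu> ^ (k+1))"
        using rpos by (intro sum_nonneg) (simp add: less_imp_le)
      have le1: "(gg \<mu>0)^2 * R ^ (k+1) \<le> (\<Sum>\<mu>\<in>{1..M}. (gg \<mu>)^2 * rr \<mu> ^ (k+1))"
      proof -
        have "(gg \<mu>0)^2 * rr \<mu>0 ^ (k+1) \<le> (\<Sum>\<mu>\<in>{1..M}. (gg \<mu>)^2 * rr \<mu> ^ (k+1))"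
          using mu0 SM rpos by (intro member_le_sum) (auto simp: less_imp_le)
        then show ?thesis using mu0 by simp
      qed
      have "1 \<le> (\<bar>\<eta>\<bar> * R) ^ (k+1)" using h by (intro one_le_power) simp
      then have "(gg \<mu>0)^2 * \<bar>\<eta>\<bar> \<le> (gg \<mu>0)^2 * \<bar>\<eta>\<bar> * (\<bar>\<eta>\<bar> * R) ^ (k+1)"
        using mult_left_mono[of 1 "(\<bar>\<eta>\<bar> * R) ^ (k+1)" "(gg \<mu>0)^2 * \<bar>\<eta>\<bar>"] by simp
      also have "\<dots> = \<bar>\<eta>\<bar> ^ (k+2) * ((gg \<mu>0)^2 * R ^ (k+1))"
        by (simp add: power_mult_distrib algebra_simps)
      also have "\<dots> \<le> \<bar>\<eta>\<bar> ^ (k+2) * (\<Sum>\<mu>\<in>{1..M}. (gg \<mu>)^2 * rr \<mu> ^ (k+1))"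
        using le1 by (simp add: mult_left_mono)
      finally have "(gg \<mu>0)^2 * \<bar>\<eta>\<bar> / (2 * real M) \<le> \<bar>\<eta>\<bar> ^ (k+2) * (\<Sum>\<mu>\<in>{1..M}. (gg \<mu>)^2 * rr \<mu> ^ (k+1)) / (2 * real M)"
        using Mpos by (simp add: divide_right_mono)
      also have "\<dots> = \<bar>(- 1) ^ k * (\<eta>^2 * \<eta> ^ k / (2 * real M)) * (\<Sum>\<mu>\<in>{1..M}. (gg \<mu>)^2 * rr \<mu> ^ (k+1))\<bar>"
        using nn Mpos by (simp add: abs_mult power_abs power_add power2_eq_square)
      finally show ?thesis unfolding e eps_def .
    qed
    from lim0 epspos obtain n0 where "\<forall>n\<ge>n0. norm ((\<Sum>\<mu>\<in>{1..M}. ((gg \<mu>)^2 * rr \<mu> * \<eta>^2 / (2 * real M)) * (- \<eta> * rr \<mu>) ^ n) - 0) < eps"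
      unfolding LIMSEQ_iff by blast
    then show False using bound[of n0] by auto
  qed
  show "\<forall>r0. (\<forall>\<mu>\<in>{1..M}. rr \<mu> = r0) \<longrightarrow> R = r0"
    using mu0 SM by auto
qed



lemma aux_k:
  fixes q F sv Y N :: real assumes "q \<noteq> 0"
  shows "- (1 / (2 * N)) * (Y^2 * ((-1)^(Suc j + 1) * F * sv^j / q^(Suc j + 1))) =
         F / (2 * N) * (-1)^(Suc j) * ((Y / q)^2 * (sv / q)^j)"
proof -
  have "q^(Suc j + 1) = q^2 * q^j" by (simp add: power2_eq_square)
  then show ?thesis using assms by (simp add: power_divide field_simps)
qed

theorem theorem4:
  fixes M :: nat and y a s :: "nat \<Rightarrow> real"
  assumes M: "M \<ge> 1"
    and spos: "\<forall>\<mu>\<in>{1..M}. s \<mu> > 0"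
  shows
    "(\<forall>\<gamma>>gamma0 M s.
        (Tfun M y a s has_real_derivative
           (1 / real M) * (\<Sum>\<mu>\<in>{1..M}. lnf (y \<mu>) (theta_star (y \<mu>) (a \<mu>) (s \<mu>) \<gamma>))) (at \<gamma>)
      \<and> (\<forall>k::nat. k \<ge> 2 \<longrightarrow>
          ((deriv ^^ (k - 1)) (Tfun M y a s) has_real_derivative
             fact k / (2 * real M) * (-1) ^ k *
             (\<Sum>\<mu>\<in>{1..M}. (gfun (y \<mu>) (a \<mu>) (s \<mu>) \<gamma>)^2 *
                 (s \<mu> / (1 + \<gamma> * s \<mu>)) ^ (k - 1))) (at \<gamma>)))
     \<and>
     ((\<exists>\<mu>\<in>{1..M}. y \<mu> \<noteq> a \<mu>) \<longrightarrow>
       (let g = (\<lambda>\<mu>. gfun (y \<mu>) (a \<mu>) (s \<mu>) 1);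
            r = (\<lambda>\<mu>. s \<mu> / (1 + s \<mu>));
            T = Tfun M y a s
        in (\<exists>L. (\<lambda>n. (\<Sum>\<mu>\<in>{1..M}. (g \<mu>)^2 * (r \<mu>) ^ n)
                     / (\<Sum>\<mu>\<in>{1..M}. (g \<mu>)^2 * (r \<mu>) ^ (n - 1))) \<longlonglongrightarrow> L
               \<and> (\<forall>\<eta>::real. \<bar>\<eta>\<bar> * L < 1 \<longrightarrow>
                     summable (\<lambda>k. (deriv ^^ k) T 1 / fact k * \<eta> ^ k))
               \<and> (\<forall>\<eta>::real. \<bar>\<eta>\<bar> * L > 1 \<longrightarrow>
                     \<not> summable (\<lambda>k. (deriv ^^ k) T 1 / fact k * \<eta> ^ k)))
          \<and> (\<forall>s0::real. (\<forall>\<mu>\<in>{1..M}. s \<mu> = s0) \<longrightarrow>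
               (\<forall>\<eta>::real. \<bar>\<eta>\<bar> * (s0 / (1 + s0)) < 1 \<longrightarrow>
                     summable (\<lambda>k. (deriv ^^ k) T 1 / fact k * \<eta> ^ k))
             \<and> (\<forall>\<eta>::real. \<bar>\<eta>\<bar> * (s0 / (1 + s0)) > 1 \<longrightarrow>
                     \<not> summable (\<lambda>k. (deriv ^^ k) T 1 / fact k * \<eta> ^ k)))))"
proof -
  define U where "U = {gamma0 M s <..}"
  define c where "c = (\<lambda>\<mu>. (y \<mu> - a \<mu>)^2)"
  define G where "G = (\<lambda>j \<gamma>. -(1/(2*real M)) * (\<Sum>\<mu>\<in>{1..M}. c \<mu> * hh j (s \<mu>) \<gamma>))"
  define T where "T = Tfun M y a s"
  have fin: "finite {1..M}" by simp
  define m where "m = Max (s ` {1..M})"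
  have sm: "\<mu> \<in> {1..M} \<Longrightarrow> s \<mu> \<le> m" for \<mu> unfolding m_def using fin by simp
  have mpos: "m > 0" using sm[of 1] spos M by force
  have g0: "gamma0 M s = -1/m" unfolding gamma0_def m_def ..
  have Mpos: "real M > 0" using M by simp
  have qpos: "1 + \<gamma> * s \<mu> > 0" if "\<gamma> \<in> U" "\<mu> \<in> {1..M}" for \<gamma> \<mu>
  proof -
    have "\<gamma> > -1/m" using that unfolding U_def g0 by simp
    then have gm: "\<gamma>*m > -1" using mpos by (simp add: field_simps)
    have sp: "s \<mu> > 0" using spos that by simp
    show ?thesis
    proof (cases "\<gamma> \<ge> 0")
      case True then show ?thesis using sp by (simp add: add_pos_nonneg)
    next
      case False
      then have "\<gamma> * s \<mu> \<ge> \<gamma> * m" using sm[OF that(2)] by (simp add: mult_left_mono_neg)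
      then show ?thesis using gm by linarith
    qed
  qed
  have openU: "open U" unfolding U_def by simp
  have oneU: "1 \<in> U"
  proof -
    have "0 < 1/m" using mpos by simp
    moreover have "-1/m = -(1/m)" by simp
    ultimately have "-1/m < 1" by linarith
    then show ?thesis unfolding U_def g0 by (simp only: greaterThan_iff)
  qed
  have T_eq: "T \<gamma> = G 0 \<gamma>" if "\<gamma> \<in> U" for \<gamma>
  proof -
    have "T \<gamma> = (1 / real M) * (\<Sum>\<mu>\<in>{1..M}. - ((y \<mu> - a \<mu>)^2) * \<gamma> / (2*(1+\<gamma> * s \<mu>)))"
      unfolding T_def Tfun_def using obj_at spos qpos[OF that] by (intro arg_cong2[where f="(*)"] sum.cong) auto
    also have "\<dots> = G 0 \<gamma>"
      unfolding G_def sum_distrib_left by (rule sum.cong) (simp_all add: c_def hh_def)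
    finally show ?thesis .
  qed
  have G_der: "(G j has_real_derivative G (Suc j) \<gamma>) (at \<gamma>)" if "\<gamma> \<in> U" for j \<gamma>
  proof -
    have "((\<lambda>x. \<Sum>\<mu>\<in>{1..M}. c \<mu> * hh j (s \<mu>) x) has_real_derivative (\<Sum>\<mu>\<in>{1..M}. c \<mu> * hh (Suc j) (s \<mu>) \<gamma>)) (at \<gamma>)"
      by (intro DERIV_sum DERIV_cmult hh_deriv qpos[OF that]) 
    then show ?thesis unfolding G_def by (intro DERIV_cmult)
  qed
  have D_eq: "\<forall>\<gamma>\<in>U. (deriv ^^ j) T \<gamma> = G j \<gamma>" for j
  proof (induction j)
    case 0 then show ?case using T_eq by simp
  next
    case (Suc j)
    show ?case
    proof
      fix \<gamma> assume g: "\<gamma> \<in> U"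
      have "((deriv ^^ j) T has_real_derivative G (Suc j) \<gamma>) (at \<gamma>)"
        by (rule has_field_derivative_transform_within_open[OF G_der[OF g] openU g]) (use Suc in simp)
      then show "(deriv ^^ Suc j) T \<gamma> = G (Suc j) \<gamma>" by (simp add: DERIV_imp_deriv)
    qed
  qed
  have D_der: "((deriv ^^ j) T has_real_derivative G (Suc j) \<gamma>) (at \<gamma>)" if "\<gamma> \<in> U" for j \<gamma>
    by (rule has_field_derivative_transform_within_open[OF G_der[OF that] openU that]) (use D_eq in simp)
  have G1: "G 1 \<gamma> = (1 / real M) * (\<Sum>\<mu>\<in>{1..M}. lnf (y \<mu>) (theta_star (y \<mu>) (a \<mu>) (s \<mu>) \<gamma>))" if "\<gamma> \<in> U" for \<gamma>
    unfolding G_def sum_distrib_left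
    by (rule sum.cong) (use lnf_at spos qpos[OF that] in \<open>auto simp: c_def hh_def power2_eq_square\<close>)
  have Gk: "G k \<gamma> = fact k / (2 * real M) * (-1) ^ k *
             (\<Sum>\<mu>\<in>{1..M}. (gfun (y \<mu>) (a \<mu>) (s \<mu>) \<gamma>)^2 * (s \<mu> / (1 + \<gamma> * s \<mu>)) ^ (k - 1))"
    if gU: "\<gamma> \<in> U" and k2: "k \<ge> 2" for \<gamma> k
    unfolding G_def sum_distrib_left
  proof (rule sum.cong)
    fix \<mu> assume mu: "\<mu> \<in> {1..M}"
    have q: "1 + \<gamma> * s \<mu> > 0" using qpos[OF gU mu] .
    obtain i where k: "k = Suc (Suc i)" using k2 by (metis add_2_eq_Suc le_Suc_ex)
    show "- (1 / (2 * real M)) * (c \<mu> * hh k (s \<mu>) \<gamma>) =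
         fact k / (2 * real M) * (- 1) ^ k * ((gfun (y \<mu>) (a \<mu>) (s \<mu>) \<gamma>)\<^sup>2 * (s \<mu> / (1 + \<gamma> * s \<mu>)) ^ (k - 1))"
      unfolding gfun_at[OF spos[rule_format, OF mu] q] hh_def c_def k
      using aux_k[of "1 + \<gamma> * s \<mu>" "real M" "y \<mu> - a \<mu>" "Suc i" "fact (Suc (Suc i))" "s \<mu>"] q
      by simp
  qed simp
  have part1: "\<forall>\<gamma>>gamma0 M s.
        (Tfun M y a s has_real_derivative
           (1 / real M) * (\<Sum>\<mu>\<in>{1..M}. lnf (y \<mu>) (theta_star (y \<mu>) (a \<mu>) (s \<mu>) \<gamma>))) (at \<gamma>)
      \<and> (\<forall>k::nat. k \<ge> 2 \<longrightarrow>
          ((deriv ^^ (k - 1)) (Tfun M y a s) has_real_derivative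
             fact k / (2 * real M) * (-1) ^ k *
             (\<Sum>\<mu>\<in>{1..M}. (gfun (y \<mu>) (a \<mu>) (s \<mu>) \<gamma>)^2 *
                 (s \<mu> / (1 + \<gamma> * s \<mu>)) ^ (k - 1))) (at \<gamma>))"
  proof (intro allI impI conjI)
    fix \<gamma> assume "\<gamma> > gamma0 M s"
    then have g: "\<gamma> \<in> U" unfolding U_def by simp
    show "(Tfun M y a s has_real_derivative
           (1 / real M) * (\<Sum>\<mu>\<in>{1..M}. lnf (y \<mu>) (theta_star (y \<mu>) (a \<mu>) (s \<mu>) \<gamma>))) (at \<gamma>)"
      using D_der[OF g, of 0] G1[OF g] unfolding T_def by simp
    fix k :: nat assume k: "k \<ge> 2"
    show "((deriv ^^ (k - 1)) (Tfun M y a s) has_real_derivative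
             fact k / (2 * real M) * (-1) ^ k *
             (\<Sum>\<mu>\<in>{1..M}. (gfun (y \<mu>) (a \<mu>) (s \<mu>) \<gamma>)^2 *
                 (s \<mu> / (1 + \<gamma> * s \<mu>)) ^ (k - 1))) (at \<gamma>)"
      using D_der[OF g, of "k-1"] Gk[OF g k] k unfolding T_def by (simp add: Suc_diff_Suc numeral_2_eq_2)
  qed
  have part2: "(\<exists>\<mu>\<in>{1..M}. y \<mu> \<noteq> a \<mu>) \<longrightarrow> (let g = (\<lambda>\<mu>. gfun (y \<mu>) (a \<mu>) (s \<mu>) 1);
            r = (\<lambda>\<mu>. s \<mu> / (1 + s \<mu>));
            T = Tfun M y a s
        in (\<exists>L. (\<lambda>n. (\<Sum>\<mu>\<in>{1..M}. (g \<mu>)^2 * (r \<mu>) ^ n)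
                     / (\<Sum>\<mu>\<in>{1..M}. (g \<mu>)^2 * (r \<mu>) ^ (n - 1))) \<longlonglongrightarrow> L
               \<and> (\<forall>\<eta>::real. \<bar>\<eta>\<bar> * L < 1 \<longrightarrow>
                     summable (\<lambda>k. (deriv ^^ k) T 1 / fact k * \<eta> ^ k))
               \<and> (\<forall>\<eta>::real. \<bar>\<eta>\<bar> * L > 1 \<longrightarrow>
                     \<not> summable (\<lambda>k. (deriv ^^ k) T 1 / fact k * \<eta> ^ k)))
          \<and> (\<forall>s0::real. (\<forall>\<mu>\<in>{1..M}. s \<mu> = s0) \<longrightarrow>
               (\<forall>\<eta>::real. \<bar>\<eta>\<bar> * (s0 / (1 + s0)) < 1 \<longrightarrow>
                     summable (\<lambda>k. (deriv ^^ k) T 1 / fact k * \<eta> ^ k))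
             \<and> (\<forall>\<eta>::real. \<bar>\<eta>\<bar> * (s0 / (1 + s0)) > 1 \<longrightarrow>
                     \<not> summable (\<lambda>k. (deriv ^^ k) T 1 / fact k * \<eta> ^ k))))"
  proof
    assume ex: "\<exists>\<mu>\<in>{1..M}. y \<mu> \<noteq> a \<mu>"
    define gg where "gg = (\<lambda>\<mu>. gfun (y \<mu>) (a \<mu>) (s \<mu>) 1)"
    define rr where "rr = (\<lambda>\<mu>. s \<mu> / (1 + s \<mu>))"
    define R where "R = Max (rr ` {\<mu>\<in>{1..M}. gg \<mu> \<noteq> 0})"
    have rpos: "\<forall>\<mu>\<in>{1..M}. 0 < rr \<mu> \<and> rr \<mu> < 1" unfolding rr_def using spos by auto
    have ex': "\<exists>\<mu>\<in>{1..M}. gg \<mu> \<noteq> 0"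
    proof -
      obtain \<mu> where mu: "\<mu> \<in> {1..M}" "y \<mu> \<noteq> a \<mu>" using ex by blast
      have "0 < s \<mu>" using spos mu by simp
      then have "0 < 1 + 1 * s \<mu>" by simp
      then have "gg \<mu> = (y \<mu> - a \<mu>)/(1 + 1 * s \<mu>)"
        unfolding gg_def using gfun_at[of "s \<mu>" 1] spos mu by simp
      moreover have "1 + s \<mu> \<noteq> 0" using \<open>0 < s \<mu>\<close> by simp
      ultimately have "gg \<mu> \<noteq> 0" using mu by simp
      then show ?thesis using mu by blast
    qed
    have Dk: "\<forall>k\<ge>2. (deriv ^^ k) T 1 = fact k / (2 * real M) * (-1) ^ k * (\<Sum>\<mu>\<in>{1..M}. (gg \<mu>)^2 * (rr \<mu>) ^ (k - 1))"
    proof (intro allI impI)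
      fix k :: nat assume k: "k \<ge> 2"
      then obtain i where ki: "k = Suc i" by (cases k) auto
      have "(deriv ^^ k) T 1 = G k 1" using D_eq oneU by blast
      also have "\<dots> = fact k / (2 * real M) * (-1) ^ k * (\<Sum>\<mu>\<in>{1..M}. (gg \<mu>)^2 * (rr \<mu>) ^ (k - 1))"
        unfolding Gk[OF oneU k] gg_def rr_def by simp
      finally show "(deriv ^^ k) T 1 = fact k / (2 * real M) * (-1) ^ k * (\<Sum>\<mu>\<in>{1..M}. (gg \<mu>)^2 * (rr \<mu>) ^ (k - 1))" .
    qed
    note P = part2[OF M rpos ex' Dk R_def]
    show "let g = (\<lambda>\<mu>. gfun (y \<mu>) (a \<mu>) (s \<mu>) 1);
            r = (\<lambda>\<mu>. s \<mu> / (1 + s \<mu>));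
            T = Tfun M y a s
        in (\<exists>L. (\<lambda>n. (\<Sum>\<mu>\<in>{1..M}. (g \<mu>)^2 * (r \<mu>) ^ n)
                     / (\<Sum>\<mu>\<in>{1..M}. (g \<mu>)^2 * (r \<mu>) ^ (n - 1))) \<longlonglongrightarrow> L
               \<and> (\<forall>\<eta>::real. \<bar>\<eta>\<bar> * L < 1 \<longrightarrow>
                     summable (\<lambda>k. (deriv ^^ k) T 1 / fact k * \<eta> ^ k))
               \<and> (\<forall>\<eta>::real. \<bar>\<eta>\<bar> * L > 1 \<longrightarrow>
                     \<not> summable (\<lambda>k. (deriv ^^ k) T 1 / fact k * \<eta> ^ k)))
          \<and> (\<forall>s0::real. (\<forall>\<mu>\<in>{1..M}. s \<mu> = s0) \<longrightarrow>
               (\<forall>\<eta>::real. \<bar>\<eta>\<bar> * (s0 / (1 + s0)) < 1 \<longrightarrow>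
                     summable (\<lambda>k. (deriv ^^ k) T 1 / fact k * \<eta> ^ k))
             \<and> (\<forall>\<eta>::real. \<bar>\<eta>\<bar> * (s0 / (1 + s0)) > 1 \<longrightarrow>
                     \<not> summable (\<lambda>k. (deriv ^^ k) T 1 / fact k * \<eta> ^ k)))"
      unfolding Let_def T_def[symmetric] gg_def[symmetric] rr_def[symmetric]
    proof (rule conjI)
      show "\<exists>L. (\<lambda>n. (\<Sum>\<mu>\<in>{1..M}. (gg \<mu>)^2 * (rr \<mu>) ^ n)
                     / (\<Sum>\<mu>\<in>{1..M}. (gg \<mu>)^2 * (rr \<mu>) ^ (n - 1))) \<longlonglongrightarrow> L
               \<and> (\<forall>\<eta>::real. \<bar>\<eta>\<bar> * L < 1 \<longrightarrow>
                     summable (\<lambda>k. (deriv ^^ k) T 1 / fact k * \<eta> ^ k))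
               \<and> (\<forall>\<eta>::real. \<bar>\<eta>\<bar> * L > 1 \<longrightarrow>
                     \<not> summable (\<lambda>k. (deriv ^^ k) T 1 / fact k * \<eta> ^ k))"
        using P(1,2,3) by blast
      show "\<forall>s0::real. (\<forall>\<mu>\<in>{1..M}. s \<mu> = s0) \<longrightarrow>
               (\<forall>\<eta>::real. \<bar>\<eta>\<bar> * (s0 / (1 + s0)) < 1 \<longrightarrow>
                     summable (\<lambda>k. (deriv ^^ k) T 1 / fact k * \<eta> ^ k))
             \<and> (\<forall>\<eta>::real. \<bar>\<eta>\<bar> * (s0 / (1 + s0)) > 1 \<longrightarrow>
                     \<not> summable (\<lambda>k. (deriv ^^ k) T 1 / fact k * \<eta> ^ k))"
      proof (intro allI impI)
        fix s0 :: real assume s0: "\<forall>\<mu>\<in>{1..M}. s \<mu> = s0"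
        have "R = s0 / (1 + s0)" using P(4) s0 unfolding rr_def by auto
        then show "(\<forall>\<eta>::real. \<bar>\<eta>\<bar> * (s0 / (1 + s0)) < 1 \<longrightarrow>
                     summable (\<lambda>k. (deriv ^^ k) T 1 / fact k * \<eta> ^ k))
             \<and> (\<forall>\<eta>::real. \<bar>\<eta>\<bar> * (s0 / (1 + s0)) > 1 \<longrightarrow>
                     \<not> summable (\<lambda>k. (deriv ^^ k) T 1 / fact k * \<eta> ^ k))"
          using P(2,3) by auto
      qed
    qed
  qed
  show ?thesis using part1 part2 by blast
qed

end
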